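(* Let $G$ be a group with finite presentation $\mathcal P=\langle t,\mathcal A:\mathcal R,\ t^{-1}at=\phi(a)\ (a\in\mathcal A)\rangle$, $A=\langle\mathcal A\rangle\le G$, $X$ the Cayley 2-complex, $M,N\ge0$ integers, and $t^NA\cdot Q(M)=\{t^Nat^{-m}:a\in A,\ 0\le m\le M\}$. Let $K_0$ be the component of $X-\{at^{-m}:a\in A,\ 0\le m\le M\}$ containing the vertex $t$, and let $v$ be a vertex of the component $t^NK_0$ of $X-t^NA\cdot Q(M)$. Then for every integer $n\ge0$, $(vt^nA)\cap t^NA\cdot Q(M)=\emptyset$.
   Context: $\mathcal A$ is finite, $\mathcal R\subset F(\mathcal A)$ finite, $\phi:F(\mathcal A)\to F(\mathcal A)$ a homomorphism. $X$ is the simply connected 2-complex with vertex set $G$, 1-skeleton the Cayley graph of $G$ with respect to $\mathcal A\cup\{t\}$, and 2-cells for the relators; $G$ acts by left multiplication. *)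

theory Defs
  imports "HOL-Algebra.Group"
begin

text \<open>Words over an alphabet of generator names: a letter (x, b) stands for x if b = False
  and for x^{-1} if b = True.\<close>
type_synonym 'a word = "('a \<times> bool) list"

definition inv_word :: "'a word \<Rightarrow> 'a word" where
  "inv_word w = rev (map (\<lambda>(x, b). (x, \<not> b)) w)"

definition word_over :: "'a set \<Rightarrow> 'a word \<Rightarrow> bool" where
  "word_over S w \<longleftrightarrow> fst ` set w \<subseteq> S"

fun eval_word :: "('g, 'm) monoid_scheme \<Rightarrow> ('a \<Rightarrow> 'g) \<Rightarrow> 'a word \<Rightarrow> 'g" where
  "eval_word G f [] = \<one>\<^bsub>G\<^esub>"
| "eval_word G f ((x, b) # w) =
     (if b then inv\<^bsub>G\<^esub> (f x) else f x) \<otimes>\<^bsub>G\<^esub> eval_word G f w"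

text \<open>Equality in the group presented by relators Rel: the congruence on words generated by
  free cancellation and insertion/deletion of relators (i.e. w ~ [] iff w lies in the normal
  closure of Rel in the free group).\<close>
inductive word_equiv :: "'a word set \<Rightarrow> 'a word \<Rightarrow> 'a word \<Rightarrow> bool" for Rel where
  refl: "word_equiv Rel u u"
| sym: "word_equiv Rel u v \<Longrightarrow> word_equiv Rel v u"
| trans: "word_equiv Rel u v \<Longrightarrow> word_equiv Rel v w \<Longrightarrow> word_equiv Rel u w"
| cancel: "word_equiv Rel (u @ [(x, b), (x, \<not> b)] @ v) (u @ v)"
| relator: "r \<in> Rel \<Longrightarrow> word_equiv Rel (u @ r @ v) (u @ v)"

definition is_presentation ::
  "('g, 'm) monoid_scheme \<Rightarrow> ('a \<Rightarrow> 'g) \<Rightarrow> 'a set \<Rightarrow> 'a word set \<Rightarrow> bool" where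
  "is_presentation G f gens Rel \<longleftrightarrow>
     group G \<and> f ` gens \<subseteq> carrier G \<and> (\<forall>r\<in>Rel. word_over gens r) \<and>
     (\<forall>g\<in>carrier G. \<exists>w. word_over gens w \<and> eval_word G f w = g) \<and>
     (\<forall>w. word_over gens w \<longrightarrow> (eval_word G f w = \<one>\<^bsub>G\<^esub> \<longleftrightarrow> word_equiv Rel w []))"

text \<open>The relators of the presentation
  < t, A : R, t^{-1} a t = phi(a) (a in A) >, i.e. R together with t^{-1} a t phi(a)^{-1}.\<close>
definition torus_relators :: "'a \<Rightarrow> 'a set \<Rightarrow> 'a word set \<Rightarrow> ('a \<Rightarrow> 'a word) \<Rightarrow> 'a word set" where
  "torus_relators t As R phi =
     R \<union> {[(t, True), (a, False), (t, False)] @ inv_word (phi a) | a. a \<in> As}"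

text \<open>Cayley 2-complex X with vertex set carrier G, an edge g -- g s for each generator s,
  and a 2-cell g.r for each g and relator r whose boundary passes through the vertices
  g * (prefix of r).  For a set S of vertices, two vertices u, w not in S are adjacent in
  X - S iff they are joined by an edge, or both lie on the boundary of a common 2-cell
  (the open 2-cell together with its boundary points outside S is connected).\<close>
definition cayley_adj ::
  "('g, 'm) monoid_scheme \<Rightarrow> ('a \<Rightarrow> 'g) \<Rightarrow> 'a set \<Rightarrow> 'a word set \<Rightarrow> 'g set \<Rightarrow> 'g \<Rightarrow> 'g \<Rightarrow> bool" where
  "cayley_adj G f gens Rel S u w \<longleftrightarrow>
     u \<in> carrier G \<and> w \<in> carrier G \<and> u \<notin> S \<and> w \<notin> S \<and>
     ((\<exists>s\<in>gens. w = u \<otimes>\<^bsub>G\<^esub> f s \<or> u = w \<otimes>\<^bsub>G\<^esub> f s) \<or>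
      (\<exists>g\<in>carrier G. \<exists>r\<in>Rel. \<exists>i\<le>length r. \<exists>j\<le>length r.
          u = g \<otimes>\<^bsub>G\<^esub> eval_word G f (take i r) \<and> w = g \<otimes>\<^bsub>G\<^esub> eval_word G f (take j r)))"

text \<open>The vertex set of the connected component of X - S containing the vertex x
  (empty if x is in S).\<close>
definition comp_verts ::
  "('g, 'm) monoid_scheme \<Rightarrow> ('a \<Rightarrow> 'g) \<Rightarrow> 'a set \<Rightarrow> 'a word set \<Rightarrow> 'g set \<Rightarrow> 'g \<Rightarrow> 'g set" where
  "comp_verts G f gens Rel S x =
     {y. x \<in> carrier G \<and> x \<notin> S \<and> (cayley_adj G f gens Rel S)\<^sup>*\<^sup>* x y}"

end

theory Submission
  imports Defs
begin

lemma word_over_append[simp]: "word_over S (u @ v) \<longleftrightarrow> word_over S u \<and> word_over S v"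
  by (auto simp: word_over_def)

lemma word_over_Cons[simp]: "word_over S ((x, b) # w) \<longleftrightarrow> x \<in> S \<and> word_over S w"
  by (auto simp: word_over_def)

lemma word_over_Nil[simp]: "word_over S []"
  by (auto simp: word_over_def)

lemma word_over_inv[simp]: "word_over S (inv_word w) \<longleftrightarrow> word_over S w"
  by (auto simp: word_over_def inv_word_def image_iff) force+

lemma word_over_take: "word_over S w \<Longrightarrow> word_over S (take i w)"
  by (auto simp: word_over_def dest: in_set_takeD)

lemma word_over_mono: "word_over S w \<Longrightarrow> S \<subseteq> S' \<Longrightarrow> word_over S' w"
  by (auto simp: word_over_def)

lemma inv_word_Cons[simp]: "inv_word ((x, b) # w) = inv_word w @ [(x, \<not> b)]"
  by (simp add: inv_word_def)

lemma inv_word_Nil[simp]: "inv_word [] = []"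
  by (simp add: inv_word_def)

context group begin

lemma canc: "x \<in> carrier G \<Longrightarrow> y \<in> carrier G \<Longrightarrow> x \<otimes> (inv x \<otimes> y) = y"
  by (simp add: m_assoc[symmetric])

lemma eval_carrier: "f ` S \<subseteq> carrier G \<Longrightarrow> word_over S w \<Longrightarrow> eval_word G f w \<in> carrier G"
proof (induction w)
  case Nil then show ?case by simp
next
  case (Cons a w) then show ?case by (cases a) auto
qed

lemma eval_append: "f ` S \<subseteq> carrier G \<Longrightarrow> word_over S u \<Longrightarrow> word_over S v \<Longrightarrow>
   eval_word G f (u @ v) = eval_word G f u \<otimes> eval_word G f v"
proof (induction u)
  case Nil then show ?case using eval_carrier[of f S v] by simp
next
  case (Cons a u)
  have "eval_word G f u \<in> carrier G" "eval_word G f v \<in> carrier G"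
    using Cons eval_carrier[of f S u] eval_carrier[of f S v] by (cases a, auto)+
  then show ?case using Cons by (cases a) (auto simp: m_assoc)
qed

lemma eval_inv: "f ` S \<subseteq> carrier G \<Longrightarrow> word_over S w \<Longrightarrow>
   eval_word G f (inv_word w) = inv (eval_word G f w)"
proof (induction w)
  case Nil then show ?case by simp
next
  case (Cons a w)
  obtain x b where a: "a = (x, b)" by (cases a)
  have x: "f x \<in> carrier G" using Cons a by auto
  have e: "eval_word G f w \<in> carrier G" using Cons a eval_carrier by auto
  have "eval_word G f (inv_word (a # w)) = inv (eval_word G f w) \<otimes> eval_word G f [(x, \<not> b)]"
    using Cons a by (simp add: eval_append[of f S])
  then show ?case using x e a by (auto simp: inv_mult_group)
qed

end

locale hnn = group G for G (structure) +
  fixes A T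
  assumes subA: "subgroup A G" and Tc: "T \<in> carrier G"
    and conj: "\<And>c. c \<in> A \<Longrightarrow> inv T \<otimes> c \<otimes> T \<in> A"
begin

lemma Ac: "c \<in> A \<Longrightarrow> c \<in> carrier G"
  by (rule subgroup.mem_carrier[OF subA])

lemma Amult: "a \<in> A \<Longrightarrow> b \<in> A \<Longrightarrow> a \<otimes> b \<in> A"
  by (rule subgroup.m_closed[OF subA])

lemma Ainv: "a \<in> A \<Longrightarrow> inv a \<in> A"
  by (rule subgroup.m_inv_closed[OF subA])

lemma Aone: "\<one> \<in> A"
  by (rule subgroup.one_closed[OF subA])

lemma conj_pow: "c \<in> A \<Longrightarrow> inv (T [^] (k::nat)) \<otimes> c \<otimes> T [^] k \<in> A"
proof (induction k)
  case 0 then show ?case using Ac by simp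
next
  case (Suc k)
  have c: "c \<in> carrier G" using Suc Ac by auto
  have "inv (T [^] Suc k) \<otimes> c \<otimes> T [^] Suc k = inv T \<otimes> (inv (T [^] k) \<otimes> c \<otimes> T [^] k) \<otimes> T"
    using Tc c by (simp add: inv_mult_group m_assoc)
  then show ?case using conj Suc by simp
qed

definition D where "D g \<longleftrightarrow> (\<exists>k::nat. g \<otimes> T [^] k \<in> A)"

lemma L1: assumes g: "g \<in> carrier G" and c: "c \<in> A" and D: "D g" shows "D (g \<otimes> c)"
proof -
  obtain k :: nat where k: "g \<otimes> T [^] k \<in> A" using D D_def by auto
  have cc: "c \<in> carrier G" using c Ac by auto
  have "g \<otimes> c \<otimes> T [^] k = (g \<otimes> T [^] k) \<otimes> (inv (T [^] k) \<otimes> c \<otimes> T [^] k)"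
  proof -
    have "T [^] k \<otimes> (inv (T [^] k) \<otimes> (c \<otimes> T [^] k)) = c \<otimes> T [^] k"
      using Tc cc by (simp add: m_assoc[symmetric])
    then show ?thesis using g cc Tc by (simp add: m_assoc)
  qed
  then have "g \<otimes> c \<otimes> T [^] k \<in> A" using Amult k conj_pow c by simp
  then show ?thesis using D_def by auto
qed

lemma L2: assumes g: "g \<in> carrier G" and D: "D g" shows "D (g \<otimes> inv T)"
proof -
  obtain k :: nat where k: "g \<otimes> T [^] k \<in> A" using D D_def by auto
  have s: "T [^] Suc k = T \<otimes> T [^] k" using nat_pow_Suc2 Tc by blast
  have "inv T \<otimes> (T \<otimes> T [^] k) = T [^] k" using Tc by (simp add: m_assoc[symmetric])
  then have "g \<otimes> inv T \<otimes> T [^] Suc k = g \<otimes> T [^] k"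
    unfolding s using g Tc by (simp add: m_assoc)
  then show ?thesis using k D_def by metis
qed

lemma L3: assumes g: "g \<in> carrier G" and D: "D g" and nA: "g \<notin> A" shows "D (g \<otimes> T)"
proof -
  obtain k :: nat where k: "g \<otimes> T [^] k \<in> A" using D D_def by auto
  then obtain j where j: "k = Suc j" using nA g by (cases k) auto
  have s: "T [^] Suc j = T \<otimes> T [^] j" using nat_pow_Suc2 Tc by blast
  have "g \<otimes> T \<otimes> T [^] j = g \<otimes> T [^] k"
    unfolding j s using g Tc by (simp add: m_assoc)
  then show ?thesis using k D_def by metis
qed

end


context hnn begin

lemma adj_back:
  assumes u: "u \<in> carrier G" and w: "w \<in> carrier G" and wA: "w \<notin> A" and Dw: "D w"
   and P: "\<And>p. P p \<Longrightarrow> p \<in> A \<or> (\<exists>c\<in>A. p = inv T \<otimes> c)"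
   and edge: "(\<exists>c\<in>A. u = w \<otimes> c \<or> w = u \<otimes> c) \<or> u = w \<otimes> T \<or> w = u \<otimes> T \<or>
      (\<exists>g\<in>carrier G. \<exists>p q. P p \<and> P q \<and> u = g \<otimes> p \<and> w = g \<otimes> q)"
  shows "D u"
  using edge
proof (elim disjE bexE exE conjE)
  fix c assume c: "c \<in> A" and "u = w \<otimes> c" then show ?thesis using L1 w Dw by simp
next
  fix c assume c: "c \<in> A" and e: "w = u \<otimes> c"
  have "u = w \<otimes> inv c" using e u c Ac by (simp add: m_assoc)
  then show ?thesis using L1 w Dw c Ainv by simp
next
  assume "u = w \<otimes> T" then show ?thesis using L3 w Dw wA by simp
next
  assume e: "w = u \<otimes> T"
  have "u = w \<otimes> inv T" using e u Tc by (simp add: m_assoc)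
  then show ?thesis using L2 w Dw by simp
next
  fix g p q assume g: "g \<in> carrier G" and Pp: "P p" and Pq: "P q" and eu: "u = g \<otimes> p" and ew: "w = g \<otimes> q"
  have qc: "q \<in> carrier G" using P[OF Pq] Ac Tc by auto
  have pc: "p \<in> carrier G" using P[OF Pp] Ac Tc by auto
  have gw: "g = w \<otimes> inv q" using ew g qc by (simp add: m_assoc)
  have Dg: "D g"
    using P[OF Pq]
  proof
    assume "q \<in> A" then show ?thesis using gw L1 w Dw Ainv by simp
  next
    assume "\<exists>c\<in>A. q = inv T \<otimes> c"
    then obtain c where c: "c \<in> A" and qe: "q = inv T \<otimes> c" by blast
    have cc: "c \<in> carrier G" using c Ac by auto
    have nA: "w \<otimes> inv c \<notin> A"
    proof
      assume "w \<otimes> inv c \<in> A"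
      then have "w \<otimes> inv c \<otimes> c \<in> A" using Amult c by blast
      then show False using wA w cc by (simp add: m_assoc)
    qed
    have "D (w \<otimes> inv c)" using L1 w Dw c Ainv by simp
    then have "D (w \<otimes> inv c \<otimes> T)" using L3 nA w cc by simp
    moreover have "w \<otimes> inv c \<otimes> T = g" using gw qe Tc cc w by (simp add: inv_mult_group m_assoc)
    ultimately show ?thesis by simp
  qed
  show ?thesis
    using P[OF Pp]
  proof
    assume "p \<in> A" then show ?thesis using eu L1 g Dg by simp
  next
    assume "\<exists>c\<in>A. p = inv T \<otimes> c"
    then obtain c where c: "c \<in> A" and pe: "p = inv T \<otimes> c" by blast
    have cc: "c \<in> carrier G" using c Ac by auto
    have "D (g \<otimes> inv T)" using L2 g Dg by simp
    then have "D (g \<otimes> inv T \<otimes> c)" using L1 g Tc c by simp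
    moreover have "g \<otimes> inv T \<otimes> c = u" using eu pe g Tc cc by (simp add: m_assoc)
    ultimately show ?thesis by simp
  qed
qed

end

fun es :: "'a \<Rightarrow> 'a word \<Rightarrow> int" where
  "es t [] = 0"
| "es t ((x, b) # w) = (if x = t then (if b then -1 else 1) else 0) + es t w"

lemma es_append[simp]: "es t (u @ v) = es t u + es t v"
  by (induction u) auto

lemma es_over: "word_over S w \<Longrightarrow> t \<notin> S \<Longrightarrow> es t w = 0"
  by (induction w) auto

lemma es_inv[simp]: "es t (inv_word w) = - es t w"
  by (induction w) auto

lemma es_rep: "es t (replicate j (t, False)) = int j"
  by (induction j) auto

lemma es_equiv: "word_equiv Rel u v \<Longrightarrow> (\<And>r. r \<in> Rel \<Longrightarrow> es t r = 0) \<Longrightarrow> es t u = es t v"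
  by (induction rule: word_equiv.induct) auto

lemma (in group) main5p8:
  fixes f :: "'x \<Rightarrow> 'a"
    and t :: 'x and As :: "'x set" and R :: "'x word set" and phi :: "'x \<Rightarrow> 'x word"
    and M N :: nat and v :: 'a
  assumes "finite As" and "t \<notin> As" and "finite R"
    and "\<forall>r\<in>R. word_over As r"
    and "\<forall>a\<in>As. word_over As (phi a)"
    and pres: "is_presentation G f (insert t As) (torus_relators t As R phi)"
  defines "A \<equiv> {eval_word G f w | w. word_over As w}"
    and "T \<equiv> f t"
  defines "S0 \<equiv> {a \<otimes>\<^bsub>G\<^esub> inv\<^bsub>G\<^esub> (T [^]\<^bsub>G\<^esub> m) | a m. a \<in> A \<and> m \<le> M}"
    and "SN \<equiv> {T [^]\<^bsub>G\<^esub> N \<otimes>\<^bsub>G\<^esub> a \<otimes>\<^bsub>G\<^esub> inv\<^bsub>G\<^esub> (T [^]\<^bsub>G\<^esub> m) | a m. a \<in> A \<and> m \<le> M}"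
  defines "K0 \<equiv> comp_verts G f (insert t As) (torus_relators t As R phi) S0 T"
  assumes "v \<in> (\<lambda>g. T [^]\<^bsub>G\<^esub> N \<otimes>\<^bsub>G\<^esub> g) ` K0"
  shows "\<forall>n::nat. {v \<otimes>\<^bsub>G\<^esub> T [^]\<^bsub>G\<^esub> n \<otimes>\<^bsub>G\<^esub> a | a. a \<in> A} \<inter> SN = {}"
proof -
  let ?gens = "insert t As" and ?Rel = "torus_relators t As R phi"
  have fc: "f ` ?gens \<subseteq> carrier G" using pres by (simp add: is_presentation_def)
  have fA: "f ` As \<subseteq> carrier G" using fc by auto
  have peq: "\<And>w. word_over ?gens w \<Longrightarrow> (eval_word G f w = \<one> \<longleftrightarrow> word_equiv ?Rel w [])"
    using pres by (simp add: is_presentation_def)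
  have Tc: "T \<in> carrier G" using fc T_def by auto
  have evA: "\<And>w. word_over As w \<Longrightarrow> eval_word G f w \<in> A" using A_def by auto
  have subA: "subgroup A G"
  proof (rule subgroup.intro)
    show "A \<subseteq> carrier G" using A_def eval_carrier[OF fA] by auto
  next
    fix x y assume "x \<in> A" "y \<in> A"
    then obtain u v where "word_over As u" "word_over As v" "x = eval_word G f u" "y = eval_word G f v"
      using A_def by auto
    then show "x \<otimes> y \<in> A" using eval_append[OF fA] evA[of "u @ v"] by simp
  next
    show "\<one> \<in> A" using evA[of "[]"] by simp
  next
    fix x assume "x \<in> A"
    then obtain u where "word_over As u" "x = eval_word G f u" using A_def by auto
    then show "inv x \<in> A" using eval_inv[OF fA] evA[of "inv_word u"] by simp
  qed
  have Ap1: "\<And>a b. a \<in> A \<Longrightarrow> b \<in> A \<Longrightarrow> a \<otimes> b \<in> A" by (rule subgroup.m_closed[OF subA])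
  have Ap2: "\<And>a. a \<in> A \<Longrightarrow> inv a \<in> A" by (rule subgroup.m_inv_closed[OF subA])
  have Ap3: "\<And>a. a \<in> A \<Longrightarrow> a \<in> carrier G" by (rule subgroup.mem_carrier[OF subA])
  note Aprops = Ap1 Ap2 Ap3
  have phirel: "inv T \<otimes> f a \<otimes> T = eval_word G f (phi a)" if a: "a \<in> As" for a
  proof -
    let ?r = "[(t, True), (a, False), (t, False)] @ inv_word (phi a)"
    have rR: "?r \<in> ?Rel" using a by (auto simp: torus_relators_def)
    have "word_equiv ?Rel ([] @ ?r @ []) ([] @ [])" using rR by (rule word_equiv.relator)
    then have we: "word_equiv ?Rel ?r []" by simp
    have pa: "word_over As (phi a)" using assms(5) a by auto
    have wo: "word_over ?gens ?r" using a pa word_over_mono[OF pa, of ?gens] by auto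
    have e1: "eval_word G f ?r = \<one>" using peq[OF wo] we by simp
    have ec: "eval_word G f (phi a) \<in> carrier G" using eval_carrier[OF fA pa] .
    have fa: "f a \<in> carrier G" using fA a by auto
    have "eval_word G f ?r = inv T \<otimes> f a \<otimes> T \<otimes> inv (eval_word G f (phi a))"
      using eval_append[OF fc, of "[(t, True), (a, False), (t, False)]" "inv_word (phi a)"]
        eval_inv[OF fA pa] wo a pa T_def Tc fa by (simp add: m_assoc word_over_mono[OF pa, of ?gens])
    then have "inv T \<otimes> f a \<otimes> T \<otimes> inv (eval_word G f (phi a)) \<otimes> eval_word G f (phi a) = eval_word G f (phi a)"
      using e1 ec by simp
    then show ?thesis using ec Tc fa by (simp add: m_assoc)
  qed
  have conjw: "word_over As w \<Longrightarrow> inv T \<otimes> eval_word G f w \<otimes> T \<in> A" for w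
  proof (induction w)
    case Nil then show ?case using Tc subgroup.one_closed[OF subA] by simp
  next
    case (Cons l w)
    obtain x b where l: "l = (x, b)" by (cases l)
    have x: "x \<in> As" and w: "word_over As w" using Cons l by auto
    have fx: "f x \<in> carrier G" using fA x by auto
    have ew: "eval_word G f w \<in> carrier G" using eval_carrier[OF fA w] .
    have pa: "word_over As (phi x)" using assms(5) x by auto
    have y: "inv T \<otimes> (if b then inv (f x) else f x) \<otimes> T \<in> A"
    proof (cases b)
      case True
      have "inv T \<otimes> inv (f x) \<otimes> T = inv (inv T \<otimes> f x \<otimes> T)"
        using Tc fx by (simp add: inv_mult_group m_assoc)
      then show ?thesis using True phirel[OF x] Aprops(2) evA[OF pa] by simp
    next
      case False then show ?thesis using phirel[OF x] evA[OF pa] by simp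
    qed
    have yc: "(if b then inv (f x) else f x) \<in> carrier G" using fx by simp
    have "inv T \<otimes> eval_word G f (l # w) \<otimes> T =
       (inv T \<otimes> (if b then inv (f x) else f x) \<otimes> T) \<otimes> (inv T \<otimes> eval_word G f w \<otimes> T)"
      using l Tc yc ew by (simp add: m_assoc canc)
    then show ?case using y Cons.IH w Aprops(1) by simp
  qed
  have conjA: "\<And>c. c \<in> A \<Longrightarrow> inv T \<otimes> c \<otimes> T \<in> A"
  proof -
    fix c assume "c \<in> A"
    then obtain w where "word_over As w" "c = eval_word G f w" unfolding A_def by blast
    then show "inv T \<otimes> c \<otimes> T \<in> A" using conjw by simp
  qed
  interpret H: hnn G A T
    by (rule hnn.intro[OF is_group], rule hnn_axioms.intro[OF subA Tc conjA])
  have evrep: "eval_word G f (replicate j (t, False)) = T [^] j" for j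
  proof (induction j)
    case 0 then show ?case by simp
  next
    case (Suc j) then show ?case using Tc T_def nat_pow_Suc2[OF Tc, of j] by simp
  qed
  have Tpow: "T [^] j \<notin> A" if j: "j > 0" for j :: nat
  proof
    assume "T [^] j \<in> A"
    then obtain w where w: "word_over As w" and e: "T [^] j = eval_word G f w" using A_def by auto
    let ?u = "replicate j (t, False) @ inv_word w"
    have wg: "word_over ?gens w" by (rule word_over_mono[OF w]) auto
    have rg: "word_over ?gens (replicate j (t, False))" by (auto simp: word_over_def)
    have "eval_word G f ?u = T [^] j \<otimes> inv (T [^] j)"
      using eval_append[OF fc rg, of "inv_word w"] wg eval_inv[OF fc wg] evrep e by simp
    then have "eval_word G f ?u = \<one>" using Tc by simp
    moreover have wu: "word_over ?gens ?u" using rg wg by simp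
    ultimately have "word_equiv ?Rel ?u []" using peq[OF wu] by simp
    moreover have "\<And>r. r \<in> ?Rel \<Longrightarrow> es t r = 0"
    proof -
      fix r assume "r \<in> ?Rel"
      then show "es t r = 0"
        unfolding torus_relators_def
      proof (elim UnE CollectE exE conjE)
        assume "r \<in> R" then have "word_over As r" using assms(4) by blast
        then show ?thesis by (rule es_over[OF _ assms(2)])
      next
        fix a assume "r = [(t, True), (a, False), (t, False)] @ inv_word (phi a)" "a \<in> As"
        then show ?thesis using es_over[of As "phi a" t] assms(5) assms(2) by auto
      qed
    qed
    ultimately have "es t ?u = es t []" by (rule es_equiv)
    then show False using es_rep[of t j] es_over[OF w assms(2)] j by simp
  qed
  have pref: "eval_word G f (take i r) \<in> A \<or> (\<exists>c\<in>A. eval_word G f (take i r) = inv T \<otimes> c)"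
    if r: "r \<in> ?Rel" for r i
    using r unfolding torus_relators_def
  proof (elim UnE CollectE exE conjE)
    assume "r \<in> R" then show ?thesis using evA word_over_take assms(4) by blast
  next
    fix a assume re: "r = [(t, True), (a, False), (t, False)] @ inv_word (phi a)" and a: "a \<in> As"
    have pa: "word_over As (phi a)" using assms(5) a by auto
    have fa: "f a \<in> carrier G" using fA a by auto
    have faA: "f a \<in> A" using evA[of "[(a, False)]"] a fa by simp
    consider "i = 0" | "i = 1" | "i = 2" | "i \<ge> 3" by linarith
    then show ?thesis
    proof cases
      case 1 then show ?thesis using H.Aone by simp
    next
      case 2 then show ?thesis using H.Aone re T_def Tc by (auto intro!: bexI[of _ \<one>])
    next
      case 3 then show ?thesis using faA re T_def Tc fa
        by (auto simp: numeral_2_eq_2 intro!: bexI[of _ "f a"])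
    next
      case 4
      let ?w = "take (i - 3) (inv_word (phi a))"
      have ww: "word_over As ?w" by (rule word_over_take) (simp add: pa)
      have wc: "eval_word G f ?w \<in> carrier G" using eval_carrier[OF fA ww] .
      obtain k where ik: "i = Suc (Suc (Suc k))" using 4
        by (intro that[of "i - 3"]) simp
      have "take i r = [(t, True), (a, False), (t, False)] @ ?w" using re unfolding ik by simp
      then have "eval_word G f (take i r) = (inv T \<otimes> f a \<otimes> T) \<otimes> eval_word G f ?w"
        using T_def Tc fa wc by (simp add: m_assoc)
      then show ?thesis using phirel[OF a] evA[OF pa] evA[OF ww] Aprops(1) by simp
    qed
  qed
  have AS0: "A \<subseteq> S0"
  proof
    fix a assume "a \<in> A"
    then have "a = a \<otimes> inv (T [^] (0::nat)) \<and> a \<in> A \<and> (0::nat) \<le> M" using Aprops(3) by simp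
    then show "a \<in> S0" unfolding S0_def by blast
  qed
  have notD: "\<not> H.D k \<and> k \<in> carrier G" if k: "k \<in> K0" for k
  proof -
    have TS: "T \<notin> S0" and rt: "(cayley_adj G f ?gens ?Rel S0)\<^sup>*\<^sup>* T k"
      using k unfolding K0_def comp_verts_def by auto
    show ?thesis using rt
    proof (induction rule: rtranclp_induct)
      case base
      have "\<not> H.D T"
      proof
        assume "H.D T"
        then obtain j :: nat where "T \<otimes> T [^] j \<in> A" unfolding H.D_def by blast
        then have "T [^] Suc j \<in> A" using nat_pow_Suc2[OF Tc, of j] by simp
        then show False using Tpow by blast
      qed
      then show ?case using Tc by simp
    next
      case (step y z)
      have adj: "cayley_adj G f ?gens ?Rel S0 y z" by fact
      have yc: "y \<in> carrier G" and zc: "z \<in> carrier G" and zS: "z \<notin> S0"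
        using adj unfolding cayley_adj_def by auto
      have "\<not> H.D z"
      proof
        assume Dz: "H.D z"
        have zA: "z \<notin> A" using zS AS0 by auto
        let ?P = "\<lambda>p. \<exists>r\<in>?Rel. \<exists>i. p = eval_word G f (take i r)"
        have "H.D y"
        proof (rule H.adj_back[OF yc zc zA Dz, of ?P])
          fix p assume "?P p" then show "p \<in> A \<or> (\<exists>c\<in>A. p = inv T \<otimes> c)" using pref by blast
        next
          have fsA: "f s \<in> A" if s: "s \<in> As" for s
          proof -
            have "eval_word G f [(s, False)] \<in> A" using s by (intro evA) simp
            then show ?thesis using fA s by auto
          qed
          show "(\<exists>c\<in>A. y = z \<otimes> c \<or> z = y \<otimes> c) \<or> y = z \<otimes> T \<or> z = y \<otimes> T \<or>
             (\<exists>g\<in>carrier G. \<exists>p q. ?P p \<and> ?P q \<and> y = g \<otimes> p \<and> z = g \<otimes> q)"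
          proof -
            have "(\<exists>s\<in>?gens. z = y \<otimes> f s \<or> y = z \<otimes> f s) \<or>
              (\<exists>g\<in>carrier G. \<exists>r\<in>?Rel. \<exists>i\<le>length r. \<exists>j\<le>length r.
                 y = g \<otimes> eval_word G f (take i r) \<and> z = g \<otimes> eval_word G f (take j r))"
              using adj unfolding cayley_adj_def by blast
            then show ?thesis
            proof (elim disjE)
              assume "\<exists>s\<in>?gens. z = y \<otimes> f s \<or> y = z \<otimes> f s"
              then obtain s where s: "s \<in> ?gens" and e: "z = y \<otimes> f s \<or> y = z \<otimes> f s" by blast
              show ?thesis
              proof (cases "s = t")
                case True then show ?thesis using e T_def by blast
              next
                case False then have "f s \<in> A" using s fsA by blast
                then show ?thesis using e by blast
              qed
            next
              assume "\<exists>g\<in>carrier G. \<exists>r\<in>?Rel. \<exists>i\<le>length r. \<exists>j\<le>length r.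
                 y = g \<otimes> eval_word G f (take i r) \<and> z = g \<otimes> eval_word G f (take j r)"
              then show ?thesis by blast
            qed
          qed
        qed
        then show False using step.IH by simp
      qed
      then show ?case using zc by simp
    qed
  qed
  show ?thesis
  proof (intro allI equalityI subsetI)
    fix n :: nat and x
    assume x: "x \<in> {v \<otimes> T [^] n \<otimes> a |a. a \<in> A} \<inter> SN"
    obtain k where k: "k \<in> K0" and v: "v = T [^] N \<otimes> k" using assms(12) by auto
    obtain a where a: "a \<in> A" and xa: "x = v \<otimes> T [^] n \<otimes> a" using x by auto
    obtain b and m :: nat where b: "b \<in> A" and xb: "x = T [^] N \<otimes> b \<otimes> inv (T [^] m)"
      using x unfolding SN_def by blast
    have kc: "k \<in> carrier G" and nD: "\<not> H.D k" using notD[OF k] by auto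
    have ac: "a \<in> carrier G" and bc: "b \<in> carrier G" using a b Aprops(3) by auto
    have "T [^] N \<otimes> (k \<otimes> T [^] n \<otimes> a) = T [^] N \<otimes> (b \<otimes> inv (T [^] m))"
      using xa xb v kc ac bc Tc by (simp add: m_assoc)
    then have e1: "k \<otimes> T [^] n \<otimes> a = b \<otimes> inv (T [^] m)"
      using kc ac bc Tc by simp 
    have ca: "inv (T [^] m) \<otimes> a \<otimes> T [^] m \<in> A" using H.conj_pow a by blast
    have c'c: "inv (T [^] m) \<otimes> a \<otimes> T [^] m \<in> carrier G" using ca Aprops(3) by blast
    have canc: "\<And>x y. x \<in> carrier G \<Longrightarrow> y \<in> carrier G \<Longrightarrow> x \<otimes> (inv x \<otimes> y) = y"
      by (simp add: m_assoc[symmetric])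
    have pm: "T [^] (n + m) = T [^] n \<otimes> T [^] m" using nat_pow_mult[OF Tc] by simp
    have "k \<otimes> T [^] (n + m) \<otimes> (inv (T [^] m) \<otimes> a \<otimes> T [^] m) = k \<otimes> T [^] n \<otimes> a \<otimes> T [^] m"
      unfolding pm using kc ac Tc by (simp add: m_assoc canc)
    also have "\<dots> = b \<otimes> inv (T [^] m) \<otimes> T [^] m" using e1 by simp
    also have "\<dots> = b" using bc Tc by (simp add: m_assoc)
    finally have "k \<otimes> T [^] (n + m) = b \<otimes> inv (inv (T [^] m) \<otimes> a \<otimes> T [^] m)"
      using inv_solve_right[of "k \<otimes> T [^] (n + m)" b "inv (T [^] m) \<otimes> a \<otimes> T [^] m"] kc Tc bc c'c
      by simp
    then have "k \<otimes> T [^] (n + m) \<in> A" using Aprops b ca by simp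
    then have "H.D k" unfolding H.D_def by blast
    then show "x \<in> {}" using nD by simp
  qed simp
qed

theorem lemma5p8:
  fixes G :: "('g, 'm) monoid_scheme" and f :: "'a \<Rightarrow> 'g"
    and t :: 'a and As :: "'a set" and R :: "'a word set" and phi :: "'a \<Rightarrow> 'a word"
    and M N :: nat and v :: 'g
  assumes "finite As" and "t \<notin> As" and "finite R"
    and "\<forall>r\<in>R. word_over As r"
    and "\<forall>a\<in>As. word_over As (phi a)"
    and "is_presentation G f (insert t As) (torus_relators t As R phi)"
  defines "A \<equiv> {eval_word G f w | w. word_over As w}"
    and "T \<equiv> f t"
  defines "S0 \<equiv> {a \<otimes>\<^bsub>G\<^esub> inv\<^bsub>G\<^esub> (T [^]\<^bsub>G\<^esub> m) | a m. a \<in> A \<and> m \<le> M}"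
    and "SN \<equiv> {T [^]\<^bsub>G\<^esub> N \<otimes>\<^bsub>G\<^esub> a \<otimes>\<^bsub>G\<^esub> inv\<^bsub>G\<^esub> (T [^]\<^bsub>G\<^esub> m) | a m. a \<in> A \<and> m \<le> M}"
  defines "K0 \<equiv> comp_verts G f (insert t As) (torus_relators t As R phi) S0 T"
  assumes "v \<in> (\<lambda>g. T [^]\<^bsub>G\<^esub> N \<otimes>\<^bsub>G\<^esub> g) ` K0"
  shows "\<forall>n::nat. {v \<otimes>\<^bsub>G\<^esub> T [^]\<^bsub>G\<^esub> n \<otimes>\<^bsub>G\<^esub> a | a. a \<in> A} \<inter> SN = {}"
proof -
  have grp: "group G" using assms(6) by (simp add: is_presentation_def)
  show ?thesis
    using assms(12) unfolding A_def T_def S0_def SN_def K0_def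
    by (rule group.main5p8[OF grp assms(1-6)])
qed

end
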